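(* For each integer $k\ge1$, the monoid $M_k$ is isomorphic to $I_k$.
   Context: Construction $\mu$: let $M$ be a monoid, $f\colon M\to M$ an endomorphism, and $t\in M$ such that $st=tf(s)$ for all $s\in M$. Then $\mu(M,t,f)=(N,\tau,\phi)$ where $N$ is the disjoint union of $M$ and $\{\tau s : s\in M\}$ ($\tau$ a new symbol, $\tau s$ denoting the pair $(\tau,s)$); writing $\tau^0s=s$ and $\tau^1 s=\tau s$, define $\phi\colon N\to M\subseteq N$ by $\phi(\tau^e s)=t^ef(s)$ and multiplication by $(\tau^{e_1}s_1)(\tau^{e_2}s_2)=\tau^{e_1}(s_1s_2)$ if $e_2=0$ and $=\tau(\phi(\tau^{e_1}s_1)s_2)$ if $e_2=1$; $\tau$ denotes $\tau 1_M$. Then $N$ is a monoid, $\phi$ an endomorphism of $N$, and $\sigma\tau=\tau\phi(\sigma)$ for all $\sigma\in N$. Recursively: $M_1$ is the one-element monoid, $t_1$ its unique element, $f_1$ its unique endomorphism; $(M_{k+1},t_{k+1},f_{k+1})=\mu(M_k,t_k,f_k)$. $I_k$ is the monoid under composition of all $g\colon\{0,\dots,k-1\}\to\{0,\dots,k-1\}$ with $g(0)=0$ and $g(i-1)\le g(i)\le g(i-1)+1$ for $0<i<k$. *)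

theory Defs
  imports "HOL-Algebra.Group" "HOL-Library.FuncSet"
begin

text \<open>Encoding: an element of the disjoint union N = M + {tau s : s in M} is encoded
  as the list e # s, where the Boolean e is the exponent of tau (False = 0, True = 1)
  and s is the (list-encoded) element of M.\<close>

type_synonym triple = "bool list monoid \<times> bool list \<times> (bool list \<Rightarrow> bool list)"

text \<open>phi restricted to values in M: phi(tau^e s) = t^e f(s).\<close>
definition mu_phi :: "bool list monoid \<Rightarrow> bool list \<Rightarrow> (bool list \<Rightarrow> bool list) \<Rightarrow> bool list \<Rightarrow> bool list" where
  "mu_phi M t f x = (if hd x then t \<otimes>\<^bsub>M\<^esub> f (tl x) else f (tl x))"

definition mu :: "triple \<Rightarrow> triple" where
  "mu T = (case T of (M, t, f) \<Rightarrow>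
     (\<lparr>carrier = {e # s | e s. s \<in> carrier M},
       mult = (\<lambda>x y. if \<not> hd y then hd x # (tl x \<otimes>\<^bsub>M\<^esub> tl y)
                      else True # (mu_phi M t f x \<otimes>\<^bsub>M\<^esub> tl y)),
       one = False # \<one>\<^bsub>M\<^esub>\<rparr>,
      True # \<one>\<^bsub>M\<^esub>,
      (\<lambda>x. False # mu_phi M t f x)))"

text \<open>Mseq n = (M_{n+1}, t_{n+1}, f_{n+1}).\<close>
fun Mseq :: "nat \<Rightarrow> triple" where
  "Mseq 0 = (\<lparr>carrier = {[]}, mult = (\<lambda>x y. []), one = []\<rparr>, [], (\<lambda>x. []))"
| "Mseq (Suc n) = mu (Mseq n)"

definition Mk :: "nat \<Rightarrow> bool list monoid" where
  "Mk k = fst (Mseq (k - 1))"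

definition Ik :: "nat \<Rightarrow> (nat \<Rightarrow> nat) monoid" where
  "Ik k = \<lparr>carrier = {g \<in> {0..<k} \<rightarrow>\<^sub>E {0..<k}. g 0 = 0 \<and>
              (\<forall>i. 0 < i \<and> i < k \<longrightarrow> g (i - 1) \<le> g i \<and> g i \<le> g (i - 1) + 1)},
           mult = (\<lambda>g h. restrict (g \<circ> h) {0..<k}),
           one = restrict id {0..<k}\<rparr>"

end

theory Submission
  imports Defs
begin

definition cntF :: "bool list \<Rightarrow> nat \<Rightarrow> nat" where
  "cntF l i = length (filter Not (take i l))"

lemma cntF_0[simp]: "cntF l 0 = 0"
  by (simp add: cntF_def)

lemma cntF_Cons_Suc[simp]: "cntF (e # s) (Suc i) = cntF s i + (if e then 0 else 1)"
  by (simp add: cntF_def)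

lemma cntF_le: "cntF l i \<le> i"
  unfolding cntF_def by (metis length_filter_le length_take min.bounded_iff order_trans nle_le)

lemma cntF_Suc: "i < length l \<Longrightarrow> cntF l (Suc i) = cntF l i + (if l ! i then 0 else 1)"
  by (simp add: cntF_def take_Suc_conv_app_nth)

lemma cntF_Cons: "cntF (e # s) i = (if i = 0 then 0 else cntF s (i - 1) + (if e then 0 else 1))"
  by (cases i) auto

lemma inv:
  "Mseq n = (M,t,f) \<Longrightarrow> carrier M = {l. length l = n} \<and>
    (\<forall>x\<in>carrier M. \<forall>y\<in>carrier M. length (x \<otimes>\<^bsub>M\<^esub> y) = n \<and>
        (\<forall>i\<le>n. cntF (x \<otimes>\<^bsub>M\<^esub> y) i = cntF x (cntF y i))) \<and>
    length (\<one>\<^bsub>M\<^esub>) = n \<and> (\<forall>i\<le>n. cntF \<one>\<^bsub>M\<^esub> i = i) \<and>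
    length t = n \<and> (\<forall>i\<le>n. cntF t i = i - 1) \<and>
    (\<forall>x\<in>carrier M. length (f x) = n \<and>
        (\<forall>i\<le>n. cntF (f x) i = (if i = 0 then 0 else cntF x (i - 1) + 1)))"
proof (induction n arbitrary: M t f)
  case 0
  then show ?case by auto
next
  case (Suc n)
  obtain M0 t0 f0 where E: "Mseq n = (M0, t0, f0)" by (cases "Mseq n") auto
  note IH = Suc.IH[OF E]
  have MM: "M = fst (mu (M0, t0, f0))" and tt: "t = True # \<one>\<^bsub>M0\<^esub>"
    and ff: "f = (\<lambda>x. False # mu_phi M0 t0 f0 x)"
    using Suc.prems E by (auto simp: mu_def)
  have car: "carrier M = {l. length l = Suc n}"
    using IH unfolding MM mu_def by (auto simp: length_Suc_conv)
  have mult: "x \<otimes>\<^bsub>M\<^esub> y = (if \<not> hd y then hd x # (tl x \<otimes>\<^bsub>M0\<^esub> tl y)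
                      else True # (mu_phi M0 t0 f0 x \<otimes>\<^bsub>M0\<^esub> tl y))" for x y
    unfolding MM mu_def by simp
  have one: "\<one>\<^bsub>M\<^esub> = False # \<one>\<^bsub>M0\<^esub>" unfolding MM mu_def by simp
  have phi: "length (mu_phi M0 t0 f0 (e # s)) = n \<and>
      (\<forall>j\<le>n. cntF (mu_phi M0 t0 f0 (e # s)) j = cntF (e # s) j)" if "length s = n" for e s
  proof (cases e)
    case True
    have sc: "s \<in> carrier M0" "f0 s \<in> carrier M0" "t0 \<in> carrier M0" using IH that by auto
    have "cntF (t0 \<otimes>\<^bsub>M0\<^esub> f0 s) j = cntF (e # s) j" if "j \<le> n" for j
    proof -
      have "cntF (t0 \<otimes>\<^bsub>M0\<^esub> f0 s) j = cntF t0 (cntF (f0 s) j)" using IH sc that by blast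
      also have "\<dots> = cntF (f0 s) j - 1" using IH that cntF_le[of "f0 s" j] by auto
      also have "\<dots> = cntF (e # s) j" using IH sc that True by (auto simp: cntF_Cons)
      finally show ?thesis .
    qed
    then show ?thesis using True IH sc by (auto simp: mu_phi_def)
  next
    case False
    have sc: "s \<in> carrier M0" using IH that by auto
    then show ?thesis using False IH by (auto simp: mu_phi_def cntF_Cons)
  qed
  show ?case
  proof (intro conjI)
    show "carrier M = {l. length l = Suc n}" by (rule car)
    show "\<forall>x\<in>carrier M. \<forall>y\<in>carrier M. length (x \<otimes>\<^bsub>M\<^esub> y) = Suc n \<and>
        (\<forall>i\<le>Suc n. cntF (x \<otimes>\<^bsub>M\<^esub> y) i = cntF x (cntF y i))"
    proof (intro ballI)
      fix x y assume x: "x \<in> carrier M" and y: "y \<in> carrier M"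
      obtain e1 s1 where x1: "x = e1 # s1" "length s1 = n" using x car by (auto simp: length_Suc_conv)
      obtain e2 s2 where y1: "y = e2 # s2" "length s2 = n" using y car by (auto simp: length_Suc_conv)
      have s1: "s1 \<in> carrier M0" and s2: "s2 \<in> carrier M0" using x1 y1 IH by auto
      show "length (x \<otimes>\<^bsub>M\<^esub> y) = Suc n \<and>
        (\<forall>i\<le>Suc n. cntF (x \<otimes>\<^bsub>M\<^esub> y) i = cntF x (cntF y i))"
      proof (cases e2)
        case False
        have "cntF (x \<otimes>\<^bsub>M\<^esub> y) i = cntF x (cntF y i)" if "i \<le> Suc n" for i
        proof (cases i)
          case (Suc j)
          then show ?thesis using IH s1 s2 that False x1 y1 by (auto simp: mult)
        qed (simp add: mult False x1 y1)
        then show ?thesis using IH s1 s2 False x1 y1 by (auto simp: mult)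
      next
        case True
        have ph: "mu_phi M0 t0 f0 x \<in> carrier M0" using phi[OF x1(2)] IH x1 by auto
        have "cntF (x \<otimes>\<^bsub>M\<^esub> y) i = cntF x (cntF y i)" if "i \<le> Suc n" for i
        proof (cases i)
          case (Suc j)
          have "cntF (x \<otimes>\<^bsub>M\<^esub> y) i = cntF (mu_phi M0 t0 f0 x) (cntF s2 j)"
            using IH ph s2 that Suc True y1 by (auto simp: mult)
          also have "\<dots> = cntF x (cntF s2 j)"
            using phi[OF x1(2)] x1 cntF_le[of s2 j] that Suc by auto
          finally show ?thesis using Suc True y1 by simp
        qed (simp add: mult True x1 y1)
        then show ?thesis using IH ph s2 True x1 y1 by (auto simp: mult)
      qed
    qed
    show "length \<one>\<^bsub>M\<^esub> = Suc n" using IH by (simp add: one)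
    show "\<forall>i\<le>Suc n. cntF \<one>\<^bsub>M\<^esub> i = i" using IH by (auto simp: one cntF_Cons)
    show "length t = Suc n" using IH by (simp add: tt)
    show "\<forall>i\<le>Suc n. cntF t i = i - 1" using IH by (auto simp: tt cntF_Cons)
    show "\<forall>x\<in>carrier M. length (f x) = Suc n \<and>
        (\<forall>i\<le>Suc n. cntF (f x) i = (if i = 0 then 0 else cntF x (i - 1) + 1))"
    proof
      fix x assume x: "x \<in> carrier M"
      obtain e1 s1 where x1: "x = e1 # s1" "length s1 = n" using x car by (auto simp: length_Suc_conv)
      show "length (f x) = Suc n \<and>
        (\<forall>i\<le>Suc n. cntF (f x) i = (if i = 0 then 0 else cntF x (i - 1) + 1))"
        using phi[OF x1(2), of e1] x1 by (auto simp: ff cntF_Cons)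
    qed
  qed
qed

lemma inj_lemma:
  assumes "length x = n" "length y = n" "\<forall>i\<le>n. cntF x i = cntF y i"
  shows "x = y"
proof (rule nth_equalityI)
  show "length x = length y" using assms by simp
  fix i assume "i < length x"
  then have "cntF x (Suc i) = cntF x i + (if x ! i then 0 else 1)"
       "cntF y (Suc i) = cntF y i + (if y ! i then 0 else 1)"
    using assms by (auto simp: cntF_Suc)
  moreover have "cntF x (Suc i) = cntF y (Suc i)" "cntF x i = cntF y i"
    using assms \<open>i < length x\<close> by auto
  ultimately show "x ! i = y ! i" by (auto split: if_splits)
qed

lemma surj_lemma:
  assumes "g 0 = 0" "\<forall>i. 0 < i \<and> i < Suc n \<longrightarrow> g (i - 1) \<le> g i \<and> g i \<le> g (i - 1) + 1"
  shows "\<forall>i\<le>n. cntF (map (\<lambda>i. g (Suc i) = g i) [0..<n]) i = g i"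
proof (intro allI impI)
  fix i assume "i \<le> n"
  then show "cntF (map (\<lambda>i. g (Suc i) = g i) [0..<n]) i = g i"
  proof (induction i)
    case 0 then show ?case using assms by simp
  next
    case (Suc i)
    have "g i \<le> g (Suc i) \<and> g (Suc i) \<le> g i + 1" using assms(2) Suc.prems
      by (metis diff_Suc_1 zero_less_Suc Suc_less_eq2 le_imp_less_Suc)
    then show ?case using Suc by (auto simp: cntF_Suc)
  qed
qed

theorem proposition4p10:
  fixes k :: nat
  assumes "k \<ge> 1"
  shows "\<exists>h. h \<in> iso (Mk k) (Ik k) \<and> h \<one>\<^bsub>Mk k\<^esub> = \<one>\<^bsub>Ik k\<^esub>"
proof -
  define n where "n = k - 1"
  have kn: "k = Suc n" using assms n_def by simp
  obtain M t f where E: "Mseq n = (M, t, f)" by (cases "Mseq n") auto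
  have MK: "Mk k = M" using E by (simp add: Mk_def n_def)
  note I = inv[OF E]
  define h where "h = (\<lambda>l. restrict (cntF l) {0..<k})"
  have inI: "h x \<in> carrier (Ik k)" if "length x = n" for x
  proof -
    have "cntF x i < k" if "i < k" for i using cntF_le[of x i] that by simp
    moreover have "cntF x (i - 1) \<le> cntF x i \<and> cntF x i \<le> cntF x (i - 1) + 1"
      if "0 < i" "i < k" for i
      using cntF_Suc[of "i - 1" x] that \<open>length x = n\<close> kn by auto
    ultimately show ?thesis using kn by (auto simp: h_def Ik_def)
  qed
  have hom: "h \<in> hom M (Ik k)"
  proof (rule homI)
    show "h x \<in> carrier (Ik k)" if "x \<in> carrier M" for x using inI that I by auto
    fix x y assume x: "x \<in> carrier M" and y: "y \<in> carrier M"
    show "h (x \<otimes>\<^bsub>M\<^esub> y) = h x \<otimes>\<^bsub>Ik k\<^esub> h y"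
    proof (rule ext)
      fix i
      show "h (x \<otimes>\<^bsub>M\<^esub> y) i = (h x \<otimes>\<^bsub>Ik k\<^esub> h y) i"
        using I x y cntF_le[of y i] kn by (auto simp: h_def Ik_def)
    qed
  qed
  have bij: "bij_betw h (carrier M) (carrier (Ik k))"
  proof (rule bij_betw_imageI)
    show "inj_on h (carrier M)"
    proof (rule inj_onI)
      fix x y assume "x \<in> carrier M" "y \<in> carrier M" "h x = h y"
      then have "\<forall>i\<le>n. cntF x i = cntF y i"
        using kn by (auto simp: h_def) (metis restrict_apply' atLeastLessThan_iff le_imp_less_Suc zero_le)
      then show "x = y"
        using I \<open>x \<in> carrier M\<close> \<open>y \<in> carrier M\<close> by (intro inj_lemma[of x n y]) auto
    qed
    show "h ` carrier M = carrier (Ik k)"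
    proof
      show "h ` carrier M \<subseteq> carrier (Ik k)" using inI I by auto
      show "carrier (Ik k) \<subseteq> h ` carrier M"
      proof
        fix g assume g: "g \<in> carrier (Ik k)"
        define l where "l = map (\<lambda>i. g (Suc i) = g i) [0..<n]"
        have c: "\<forall>i\<le>n. cntF l i = g i" unfolding l_def
          using g kn by (intro surj_lemma) (auto simp: Ik_def)
        have "h l = g"
        proof
          fix i show "h l i = g i" using c g kn by (auto simp: h_def Ik_def PiE_def extensional_def)
        qed
        moreover have "l \<in> carrier M" using I by (simp add: l_def)
        ultimately show "g \<in> h ` carrier M" by blast
      qed
    qed
  qed
  have "h \<one>\<^bsub>M\<^esub> = \<one>\<^bsub>Ik k\<^esub>"
    using I kn by (auto simp: h_def Ik_def restrict_def)
  then show ?thesis using hom bij MK by (auto simp: iso_def)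
qed

end
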